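(* Let $G=(V,q)$ be a reversible, stochastically complete graph and let $\widetilde G=(V\times V,\widetilde q)$ be a coupling graph of $G$ with heat semigroup $\widetilde P_t$. Let $W:=V^2\setminus\{(x,x):x\in V\}$ and suppose $\widetilde P_t1_W\to0$ pointwise as $t\to\infty$. Then every bounded function $\phi:V\to\mathbb R$ with $\Delta\phi=0$ is constant.
   Context: A graph $G=(V,q)$ consists of a countable set $V$ and a function $q:V\times V\to[0,\infty)$ such that $\#\{y:q(x,y)>0\}<\infty$ for every $x\in V$; its Laplacian is $\Delta f(x)=\sum_y q(x,y)(f(y)-f(x))$. $G$ is reversible if there is $m:V\to(0,\infty)$ with $q(x,y)m(x)=q(y,x)m(y)$. Heat semigroup of any graph: for finite $S$ let $q_S(x,y)=q(x,y)1_S(x)$ with Laplacian $\Delta_S$ and $P^S_tf=\sum_{k\ge0}t^k\Delta_S^k(f1_S)/k!$; for bounded $f$, $P_tf=\lim_iP_t^{S_i}f$ pointwise along any increasing exhaustion by finite sets. $G$ is stochastically complete if $P_t1=1$ for all $t\ge0$. $(f\otimes g)(x,y)=f(x)g(y)$. A coupling graph of $G$ is a graph $\widetilde G=(V\times V,\widetilde q)$ whose Laplacian satisfies $\widetilde\Delta(f\otimes 1)=\Delta f\otimes 1$ and $\widetilde\Delta(1\otimes f)=1\otimes\Delta f$ for all $f:V\to\mathbb R$. *)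

theory Defs
  imports "HOL-Analysis.Analysis"
begin

definition is_graph :: "('v \<Rightarrow> 'v \<Rightarrow> real) \<Rightarrow> bool" where
  "is_graph q \<longleftrightarrow> (\<forall>x y. 0 \<le> q x y) \<and> (\<forall>x. finite {y. 0 < q x y})"

definition lap :: "('v \<Rightarrow> 'v \<Rightarrow> real) \<Rightarrow> ('v \<Rightarrow> real) \<Rightarrow> 'v \<Rightarrow> real" where
  "lap q f x = (\<Sum>y\<in>{y. 0 < q x y}. q x y * (f y - f x))"

definition reversible :: "('v \<Rightarrow> 'v \<Rightarrow> real) \<Rightarrow> bool" where
  "reversible q \<longleftrightarrow> (\<exists>m. (\<forall>x. 0 < m x) \<and> (\<forall>x y. q x y * m x = q y x * m y))"

definition lapS :: "('v \<Rightarrow> 'v \<Rightarrow> real) \<Rightarrow> 'v set \<Rightarrow> ('v \<Rightarrow> real) \<Rightarrow> 'v \<Rightarrow> real" where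
  "lapS q S f = lap (\<lambda>x y. q x y * indicator S x) f"

definition heatS :: "('v \<Rightarrow> 'v \<Rightarrow> real) \<Rightarrow> 'v set \<Rightarrow> real \<Rightarrow> ('v \<Rightarrow> real) \<Rightarrow> 'v \<Rightarrow> real" where
  "heatS q S t f x = (\<Sum>k. t ^ k / fact k * ((lapS q S ^^ k) (\<lambda>y. f y * indicator S y)) x)"

definition exhaustion :: "(nat \<Rightarrow> 'v set) \<Rightarrow> bool" where
  "exhaustion S \<longleftrightarrow> (\<forall>i. finite (S i)) \<and> incseq S \<and> (\<Union>i. S i) = UNIV"

text \<open>Heat semigroup: pointwise limit along an increasing exhaustion by finite sets
 (the limit is independent of the exhaustion, so we fix one by choice).\<close>
definition heat :: "('v \<Rightarrow> 'v \<Rightarrow> real) \<Rightarrow> real \<Rightarrow> ('v \<Rightarrow> real) \<Rightarrow> 'v \<Rightarrow> real" where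
  "heat q t f x = lim (\<lambda>i. heatS q ((SOME S. exhaustion S) i) t f x)"

definition stoch_complete :: "('v \<Rightarrow> 'v \<Rightarrow> real) \<Rightarrow> bool" where
  "stoch_complete q \<longleftrightarrow> (\<forall>t\<ge>0. heat q t (\<lambda>_. 1) = (\<lambda>_. 1))"

definition coupling_graph :: "('v \<Rightarrow> 'v \<Rightarrow> real) \<Rightarrow> ('v \<times> 'v \<Rightarrow> 'v \<times> 'v \<Rightarrow> real) \<Rightarrow> bool" where
  "coupling_graph q qt \<longleftrightarrow> is_graph qt \<and>
     (\<forall>f. lap qt (\<lambda>(x, y). f x * 1) = (\<lambda>(x, y). lap q f x * 1)) \<and>
     (\<forall>f. lap qt (\<lambda>(x, y). 1 * f y) = (\<lambda>(x, y). 1 * lap q f y))"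

end

theory Submission
  imports Defs
begin


definition deg :: "('v \<Rightarrow> 'v \<Rightarrow> real) \<Rightarrow> 'v \<Rightarrow> real" where
  "deg q x = (\<Sum>y\<in>{y. 0 < q x y}. q x y)"

definition Bop :: "('v \<Rightarrow> 'v \<Rightarrow> real) \<Rightarrow> 'v set \<Rightarrow> real \<Rightarrow> ('v \<Rightarrow> real) \<Rightarrow> 'v \<Rightarrow> real" where
  "Bop q S c = (\<lambda>h z. lapS q S h z + c * h z)"

lemma lap_lin: "lap q (\<lambda>z. a * f z + b * h z) x = a * lap q f x + b * lap q h x"
proof -
  have "lap q (\<lambda>z. a * f z + b * h z) x = (\<Sum>y\<in>{y. 0 < q x y}. a * (q x y * (f y - f x)) + b * (q x y * (h y - h x)))"
    unfolding lap_def by (rule sum.cong) (auto simp: algebra_simps)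
  then show ?thesis unfolding lap_def by (simp add: sum.distrib sum_distrib_left)
qed

lemma lap_add: "lap q (\<lambda>z. f z + h z) x = lap q f x + lap q h x"
  using lap_lin[of q 1 f 1 h x] by simp

lemma lap_smult: "lap q (\<lambda>z. a * f z) x = a * lap q f x"
  using lap_lin[of q a f 0 h x] by simp

lemma lap_const: "lap q (\<lambda>z. a) x = 0"
  unfolding lap_def by simp

lemma lap_expand: "lap q h x = (\<Sum>y\<in>{y. 0 < q x y}. q x y * h y) - deg q x * h x"
proof -
  have "lap q h x = (\<Sum>y\<in>{y. 0 < q x y}. q x y * h y - q x y * h x)"
    unfolding lap_def by (simp add: algebra_simps)
  then show ?thesis unfolding deg_def by (simp add: sum_subtractf sum_distrib_right)
qed

lemma R_mono:
  assumes "deg q x \<le> c" "\<And>z. h z \<le> h' z"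
  shows "lap q h x + c * h x \<le> lap q h' x + c * h' x"
proof -
  have "(\<Sum>y\<in>{y. 0 < q x y}. q x y * h y) \<le> (\<Sum>y\<in>{y. 0 < q x y}. q x y * h' y)"
    by (rule sum_mono) (simp add: assms(2) mult_left_mono)
  moreover have "(c - deg q x) * h x \<le> (c - deg q x) * h' x"
    using assms by (simp add: mult_left_mono)
  ultimately show ?thesis unfolding lap_expand by (simp add: algebra_simps)
qed

lemma lapS_in: "x \<in> S \<Longrightarrow> lapS q S h x = lap q h x"
  unfolding lapS_def lap_def by simp

lemma lapS_out: "x \<notin> S \<Longrightarrow> lapS q S h x = 0"
  unfolding lapS_def lap_def by simp

lemma Bop_in: "z \<in> S \<Longrightarrow> Bop q S c h z = lap q h z + c * h z"
  unfolding Bop_def by (simp add: lapS_in)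

lemma Bop_out: "z \<notin> S \<Longrightarrow> Bop q S c h z = c * h z"
  unfolding Bop_def by (simp add: lapS_out)

lemma Bop_mono:
  assumes "\<forall>x\<in>S. deg q x \<le> c" "0 \<le> c" "\<And>z. h z \<le> h' z"
  shows "Bop q S c h z \<le> Bop q S c h' z"
  using assms by (cases "z \<in> S") (auto simp: Bop_in Bop_out R_mono mult_left_mono)

lemma Bop_smult: "Bop q S c (\<lambda>z. a * f z) = (\<lambda>z. a * Bop q S c f z)"
  unfolding Bop_def lapS_def by (auto simp: lap_smult algebra_simps)

lemma Bop_iter_mono:
  assumes "\<forall>x\<in>S. deg q x \<le> c" "0 \<le> c" "\<And>z. h z \<le> h' z"
  shows "(Bop q S c ^^ k) h z \<le> (Bop q S c ^^ k) h' z"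
  using assms(3) proof (induction k arbitrary: z)
  case 0 then show ?case by simp
next
  case (Suc k) then show ?case using Bop_mono[OF assms(1,2)] by simp
qed

lemma Bop_iter_supp:
  assumes "\<And>z. z \<notin> S \<Longrightarrow> h z = 0" "z \<notin> S"
  shows "(Bop q S c ^^ k) h z = 0"
  using assms(2) by (induction k arbitrary: z) (auto simp: Bop_out assms(1))

lemma Bop_ind: 
  assumes "0 \<le> c"
  shows "Bop q S c (indicator S) z \<le> c * indicator S z"
proof (cases "z \<in> S")
  case True
  have "(\<Sum>y\<in>{y. 0 < q z y}. q z y * indicator S y) \<le> deg q z"
    unfolding deg_def by (rule sum_mono) (auto simp: indicator_def)
  then show ?thesis using True by (simp add: Bop_in lap_expand)
qed (simp add: Bop_out)

lemma Bop_iter_bound: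
  assumes "\<forall>x\<in>S. deg q x \<le> c" "0 \<le> c" "\<And>z. 0 \<le> h z" "\<And>z. h z \<le> indicator S z"
  shows "0 \<le> (Bop q S c ^^ k) h z \<and> (Bop q S c ^^ k) h z \<le> c ^ k * indicator S z"
proof -
  have le: "(Bop q S c ^^ k) (indicator S) z \<le> c ^ k * indicator S z" for z
  proof (induction k arbitrary: z)
    case 0 then show ?case by simp
  next
    case (Suc k)
    have "(Bop q S c ^^ Suc k) (indicator S) z \<le> Bop q S c (\<lambda>z. c ^ k * indicator S z) z"
      using Bop_mono[OF assms(1,2), of "(Bop q S c ^^ k) (indicator S)"] Suc by simp
    also have "\<dots> = c ^ k * Bop q S c (indicator S) z" by (simp add: Bop_smult)
    also have "\<dots> \<le> c ^ k * (c * indicator S z)"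
      using Bop_ind[OF assms(2), of q S z] assms(2) by (simp add: mult_left_mono)
    finally show ?case by (simp add: mult.assoc mult.commute mult.left_commute)
  qed
  have b0: "Bop q S c (\<lambda>_. 0) = (\<lambda>_. 0)" unfolding Bop_def lapS_def lap_def by simp
  have z0': "(Bop q S c ^^ k) (\<lambda>_. 0) = (\<lambda>_. 0)"
    by (induction k) (simp_all add: b0)
  have z0: "(Bop q S c ^^ k) (\<lambda>_. 0) z = 0" for z using z0' by simp
  show ?thesis
    using Bop_iter_mono[OF assms(1,2), of "\<lambda>_. 0" h k z] Bop_iter_mono[OF assms(1,2), of h "indicator S" k z]
      assms(3,4) le[of z] z0 by auto
qed



lemma binom_step:
  fixes b :: "nat \<Rightarrow> real"
  shows "(\<Sum>j\<le>Suc k. real (Suc k choose j) * (-c)^(Suc k-j) * b j) =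
         (\<Sum>j\<le>k. real (k choose j) * (-c)^(k-j) * (b (Suc j) - c * b j))"
proof -
  have A0: "(\<Sum>j\<le>Suc k. real (Suc k choose j) * (-c)^(Suc k-j) * b j) =
      (-c)^(Suc k) * b 0 + (\<Sum>j\<le>k. real (Suc k choose Suc j) * (-c)^(Suc k - Suc j) * b (Suc j))"
    by (subst sum.atMost_Suc_shift) simp
  have A: "(\<Sum>j\<le>Suc k. real (Suc k choose j) * (-c)^(Suc k-j) * b j) =
     (-c)^(Suc k) * b 0 + (\<Sum>j\<le>k. real (k choose j) * (-c)^(k-j) * b (Suc j))
       + (\<Sum>j\<le>k. real (k choose Suc j) * (-c)^(k-j) * b (Suc j))"
    unfolding A0 by (simp add: sum.distrib algebra_simps del: sum.atMost_Suc)
  have B: "(\<Sum>j\<le>Suc k. real (k choose j) * (-c)^(Suc k-j) * b j) =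
     (-c)^(Suc k) * b 0 + (\<Sum>j\<le>k. real (k choose Suc j) * (-c)^(k-j) * b (Suc j))"
    by (subst sum.atMost_Suc_shift) simp
  have C: "(\<Sum>j\<le>Suc k. real (k choose j) * (-c)^(Suc k-j) * b j) =
      (\<Sum>j\<le>k. real (k choose j) * (-c)^(Suc k-j) * b j)"
    by simp
  have D: "(\<Sum>j\<le>k. real (k choose j) * (-c)^(Suc k-j) * b j) = (\<Sum>j\<le>k. real (k choose j) * (-c)^(k-j) * (- c * b j))"
    by (rule sum.cong) (auto simp: Suc_diff_le)
  have E: "(\<Sum>j\<le>Suc k. real (Suc k choose j) * (-c)^(Suc k-j) * b j) =
     (\<Sum>j\<le>k. real (k choose j) * (-c)^(k-j) * b (Suc j)) + (\<Sum>j\<le>k. real (k choose j) * (-c)^(k-j) * (- c * b j))"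
    using A B C D by linarith
  have F: "(\<Sum>j\<le>k. real (k choose j) * (-c)^(k-j) * (b (Suc j) - c * b j)) =
     (\<Sum>j\<le>k. real (k choose j) * (-c)^(k-j) * b (Suc j) + real (k choose j) * (-c)^(k-j) * (- c * b j))"
    by (rule sum.cong) (auto simp: algebra_simps)
  show ?thesis unfolding E F sum.distrib ..
qed

lemma L_sum:
  fixes L :: "('a \<Rightarrow> real) \<Rightarrow> ('a \<Rightarrow> real)"
  assumes lin: "\<And>a b f h. L (\<lambda>z. a * f z + b * h z) = (\<lambda>z. a * L f z + b * L h z)"
  assumes "finite J"
  shows "L (\<lambda>z. \<Sum>j\<in>J. w j * G j z) = (\<lambda>z. \<Sum>j\<in>J. w j * L (G j) z)"
  using assms(2)
proof (induction J rule: finite_induct)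
  case empty
  then show ?case using lin[of 0 "\<lambda>_. 0" 0 "\<lambda>_. 0"] by simp
next
  case (insert x F')
  then show ?case using lin[of "w x" "G x" 1 "\<lambda>z. \<Sum>j\<in>F'. w j * G j z"] by simp
qed

lemma pow_shift:
  fixes L :: "('a \<Rightarrow> real) \<Rightarrow> ('a \<Rightarrow> real)"
  assumes lin: "\<And>a b f h. L (\<lambda>z. a * f z + b * h z) = (\<lambda>z. a * L f z + b * L h z)"
  shows "(L ^^ k) g = (\<lambda>z. \<Sum>j\<le>k. real (k choose j) * (-c)^(k-j) * (((\<lambda>h z. L h z + c * h z) ^^ j) g z))"
proof (induction k)
  case 0 then show ?case by simp
next
  case (Suc k)
  define Bf where "Bf = (\<lambda>h z. L h z + c * h z)"
  have LB: "L ((Bf ^^ j) g) z = (Bf ^^ Suc j) g z - c * (Bf ^^ j) g z" for j z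
    by (simp add: Bf_def)
  have "(L ^^ Suc k) g = L ((L ^^ k) g)" by simp
  also have "\<dots> = (\<lambda>z. \<Sum>j\<le>k. (real (k choose j) * (-c)^(k-j)) * L ((Bf ^^ j) g) z)"
    unfolding Suc Bf_def[symmetric] mult.assoc[symmetric]
    by (rule L_sum; (rule lin)?; simp)
  also have "\<dots> = (\<lambda>z. \<Sum>j\<le>Suc k. real (Suc k choose j) * (-c)^(Suc k-j) * (Bf ^^ j) g z)"
    unfolding LB binom_step by (simp add: mult.assoc)
  finally show ?case unfolding Bf_def .
qed



lemma cauchy_shift:
  fixes b :: "nat \<Rightarrow> real"
  assumes bnd: "\<And>j. \<bar>b j\<bar> \<le> C ^ j" and "0 \<le> C"
  shows "summable (\<lambda>j. t^j / fact j * b j)"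
    and "(\<Sum>k. t^k / fact k * (\<Sum>j\<le>k. real (k choose j) * (-c)^(k-j) * b j))
         = exp (-(c*t)) * (\<Sum>j. t^j / fact j * b j)"
proof -
  define A where "A j = t^j / fact j * b j" for j
  define D where "D i = (-(c*t))^i / fact i" for i
  have sA: "summable (\<lambda>j. norm (A j))"
  proof (rule summable_comparison_test[OF _ summable_exp[of "C * \<bar>t\<bar>"]])
    show "\<exists>N. \<forall>n\<ge>N. norm (norm (A n)) \<le> inverse (fact n) * (C * \<bar>t\<bar>) ^ n"
    proof (intro exI allI impI)
      fix n
      have "\<bar>t\<bar>^n * \<bar>b n\<bar> \<le> \<bar>t\<bar>^n * C^n" by (rule mult_left_mono[OF bnd]) simp
      then have "inverse (fact n) * (\<bar>t\<bar>^n * \<bar>b n\<bar>) \<le> inverse (fact n) * (\<bar>t\<bar>^n * C^n)"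
        by (rule mult_left_mono) simp
      moreover have "norm (norm (A n)) = inverse (fact n) * (\<bar>t\<bar>^n * \<bar>b n\<bar>)"
        unfolding A_def by (simp add: abs_mult power_abs divide_inverse)
      moreover have "(C * \<bar>t\<bar>) ^ n = \<bar>t\<bar>^n * C^n" by (simp add: power_mult_distrib)
      ultimately show "norm (norm (A n)) \<le> inverse (fact n) * (C * \<bar>t\<bar>) ^ n" by simp
    qed
  qed
  then show "summable (\<lambda>j. t^j / fact j * b j)" using summable_norm_cancel[OF sA] unfolding A_def by simp
  have sD: "summable (\<lambda>j. norm (D j))"
  proof (rule summable_comparison_test[OF _ summable_exp[of "\<bar>c * t\<bar>"]])
    show "\<exists>N. \<forall>n\<ge>N. norm (norm (D n)) \<le> inverse (fact n) * \<bar>c * t\<bar> ^ n"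
      by (intro exI allI impI) (simp add: D_def abs_mult power_abs divide_inverse)
  qed
  have eD: "(\<Sum>i. D i) = exp (-(c*t))"
    using exp_converges[of "-(c*t)"] unfolding D_def by (simp add: sums_iff divide_inverse scaleR_conv_of_real mult.commute)
  have "(\<lambda>k. \<Sum>i\<le>k. A i * D (k - i)) sums ((\<Sum>k. A k) * (\<Sum>k. D k))"
    by (rule Cauchy_product_sums[OF sA sD])
  moreover have "(\<Sum>i\<le>k. A i * D (k - i)) = t^k / fact k * (\<Sum>j\<le>k. real (k choose j) * (-c)^(k-j) * b j)" for k
  proof -
    have "A i * D (k - i) = t^k / fact k * (real (k choose i) * (-c)^(k-i) * b i)" if "i \<le> k" for i
    proof -
      have "t^k = t^i * t^(k-i)" using that by (simp add: power_add[symmetric])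
      moreover have "real (k choose i) = fact k / (fact i * fact (k - i))" using binomial_fact[OF that] by simp
      moreover have "(-(c*t))^(k-i) = (-c)^(k-i) * t^(k-i)" by (simp add: power_mult_distrib[symmetric])
      moreover have "fact i \<noteq> (0::real)" "fact (k-i) \<noteq> (0::real)" "fact k \<noteq> (0::real)" by auto
      ultimately show ?thesis unfolding A_def D_def
        by (simp add: divide_simps)
    qed
    then show ?thesis by (simp add: sum_distrib_left)
  qed
  ultimately show "(\<Sum>k. t^k / fact k * (\<Sum>j\<le>k. real (k choose j) * (-c)^(k-j) * b j))
         = exp (-(c*t)) * (\<Sum>j. t^j / fact j * b j)"
    unfolding eD A_def by (simp add: sums_iff mult.commute)
qed



lemma lap_affine: "lap q (\<lambda>z. a * f z + b * h z + d) x = a * lap q f x + b * lap q h x"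
proof -
  have "lap q (\<lambda>z. a * f z + b * h z + d) x = lap q (\<lambda>z. a * f z + b * h z) x"
    unfolding lap_def by (rule sum.cong) (auto simp: algebra_simps)
  then show ?thesis by (simp add: lap_lin)
qed

lemma lapS_lin: "lapS q S (\<lambda>z. a * f z + b * h z) = (\<lambda>z. a * lapS q S f z + b * lapS q S h z)"
  unfolding lapS_def by (rule ext) (rule lap_lin)

lemma deg_exists: "finite S \<Longrightarrow> \<exists>c\<ge>0. \<forall>x\<in>S. deg q x \<le> c"
  by (rule exI[of _ "\<Sum>x\<in>S. \<bar>deg q x\<bar>"])
     (auto intro: order_trans[OF abs_ge_self member_le_sum[where f="\<lambda>x. \<bar>deg q x\<bar>"]] simp: sum_nonneg)

lemma heatS_shift:
  assumes deg: "\<forall>x\<in>S. deg q x \<le> c" and c: "0 \<le> c" and f: "\<And>z. 0 \<le> f z" "\<And>z. f z \<le> 1"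
  shows "summable (\<lambda>j. t^j / fact j * (Bop q S c ^^ j) (\<lambda>y. f y * indicator S y) z)"
    and "heatS q S t f z = exp (-(c*t)) * (\<Sum>j. t^j / fact j * (Bop q S c ^^ j) (\<lambda>y. f y * indicator S y) z)"
proof -
  let ?g = "\<lambda>y. f y * indicator S y"
  have bnd: "\<bar>(Bop q S c ^^ j) ?g z\<bar> \<le> c ^ j" for j
  proof -
    have h0: "0 \<le> ?g z" for z using f[of z] by (auto simp: indicator_def)
    have h1: "?g z \<le> indicator S z" for z using f[of z] by (auto simp: indicator_def)
    have "0 \<le> (Bop q S c ^^ j) ?g z \<and> (Bop q S c ^^ j) ?g z \<le> c ^ j * indicator S z"
      by (rule Bop_iter_bound[OF deg c h0 h1])
    moreover have "c ^ j * indicator S z \<le> c ^ j" using c by (simp add: indicator_def)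
    ultimately show ?thesis by simp
  qed
  show "summable (\<lambda>j. t^j / fact j * (Bop q S c ^^ j) ?g z)" by (rule cauchy_shift(1)[OF bnd c])
  have "heatS q S t f z = (\<Sum>k. t ^ k / fact k * ((lapS q S ^^ k) ?g) z)" unfolding heatS_def ..
  also have "\<dots> = (\<Sum>k. t ^ k / fact k * (\<Sum>j\<le>k. real (k choose j) * (-c)^(k-j) * (Bop q S c ^^ j) ?g z))"
  proof -
    have ps: "(lapS q S ^^ k) ?g = (\<lambda>z. \<Sum>j\<le>k. real (k choose j) * (-c)^(k-j) * (((\<lambda>h z. lapS q S h z + c * h z) ^^ j) ?g z))" for k
      by (rule pow_shift) (rule lapS_lin)
    show ?thesis unfolding Bop_def ps ..
  qed
  also have "\<dots> = exp (-(c*t)) * (\<Sum>j. t^j / fact j * (Bop q S c ^^ j) ?g z)"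
    by (rule cauchy_shift(2)[OF bnd c])
  finally show "heatS q S t f z = exp (-(c*t)) * (\<Sum>j. t^j / fact j * (Bop q S c ^^ j) ?g z)" .
qed

lemma sums_exp_ct: "(\<lambda>k. t^k / fact k * c^k) sums exp (c*t)" for t c :: real
proof -
  have "(\<lambda>k. t^k / fact k * c^k) = (\<lambda>n. (c*t)^n /\<^sub>R fact n)"
    by (rule ext) (unfold real_scaleR_def, simp add: divide_inverse power_mult_distrib mult.commute)
  then show ?thesis using exp_converges[of "c*t"] by simp
qed



lemma Bop_zero: "(Bop q S c ^^ k) (\<lambda>_. 0) = (\<lambda>_. 0)"
proof -
  have b0: "Bop q S c (\<lambda>_. 0) = (\<lambda>_. 0)" unfolding Bop_def lapS_def lap_def by simp
  show ?thesis by (induction k) (simp_all add: b0)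
qed

lemma Bop_iter_nonneg:
  assumes "\<forall>x\<in>S. deg q x \<le> c" "0 \<le> c" "\<And>z. 0 \<le> h z"
  shows "0 \<le> (Bop q S c ^^ k) h z"
  using Bop_iter_mono[OF assms(1,2), of "\<lambda>_. 0" h k z] assms(3) by (simp add: Bop_zero)

lemma ind_I:
  fixes q :: "'a \<Rightarrow> 'a \<Rightarrow> real"
  assumes deg: "\<forall>x\<in>S. deg q x \<le> c" and c: "0 \<le> c"
    and harm: "\<And>p. lap q \<psi> p = 0" and bnd: "\<And>p. \<psi> p \<le> M * indicator W p" and M: "0 \<le> M"
  shows "c^k * \<psi> p \<le> M * ((Bop q S c ^^ k) (\<lambda>r. indicator W r * indicator S r) p + c^k - (Bop q S c ^^ k) (indicator S) p)"
proof (induction k arbitrary: p)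
  case 0
  have "M * indicator W p \<le> M" using M by (simp add: indicator_def)
  then show ?case using bnd[of p] M by (auto simp: indicator_def)
next
  case (Suc k)
  define \<beta> where "\<beta> = (Bop q S c ^^ k) (\<lambda>r. indicator W r * indicator S r)"
  define \<gamma> where "\<gamma> = (Bop q S c ^^ k) (indicator S)"
  show ?case
  proof (cases "p \<in> S")
    case False
    have a: "(Bop q S c ^^ Suc k) (\<lambda>r. indicator W r * indicator S r) p = 0"
      by (rule Bop_iter_supp) (auto simp: False)
    have b: "(Bop q S c ^^ Suc k) (indicator S) p = 0"
      by (rule Bop_iter_supp) (auto simp: False)
    have "\<psi> p \<le> M" using bnd[of p] M by (cases "p \<in> W") auto
    then have "c^Suc k * \<psi> p \<le> c^Suc k * M" using c by (simp add: mult_left_mono)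
    then show ?thesis unfolding a b by (simp add: mult.commute)
  next
    case True
    have e1: "(Bop q S c ^^ Suc k) (\<lambda>r. indicator W r * indicator S r) p = lap q \<beta> p + c * \<beta> p"
      by (simp add: \<beta>_def Bop_in True)
    have e2: "(Bop q S c ^^ Suc k) (indicator S) p = lap q \<gamma> p + c * \<gamma> p"
      by (simp add: \<gamma>_def Bop_in True)
    define F where "F r = M * \<beta> r + (-M) * \<gamma> r + M * c^k" for r
    have le: "c^k * \<psi> r \<le> F r" for r using Suc.IH[of r] unfolding F_def \<beta>_def \<gamma>_def by (simp add: algebra_simps)
    have "lap q (\<lambda>r. c^k * \<psi> r) p + c * (c^k * \<psi> p) \<le> lap q F p + c * F p"
      by (rule R_mono) (use deg True le in auto)
    moreover have "lap q (\<lambda>r. c^k * \<psi> r) p = 0" by (simp add: lap_smult harm)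
    moreover have "lap q F p = M * lap q \<beta> p + (-M) * lap q \<gamma> p"
      unfolding F_def by (rule lap_affine)
    ultimately show ?thesis unfolding e1 e2 F_def by (simp add: algebra_simps)
  qed
qed

lemma ind_II:
  fixes q :: "'a \<Rightarrow> 'a \<Rightarrow> real" and qt :: "'a \<times> 'a \<Rightarrow> 'a \<times> 'a \<Rightarrow> real"
  assumes deg: "\<forall>x\<in>S. deg q x \<le> c" and degt: "\<forall>p\<in>S\<times>S. deg qt p \<le> c" and c: "0 \<le> c"
    and c1: "\<And>f. lap qt (\<lambda>r. f (fst r)) = (\<lambda>r. lap q f (fst r))"
    and c2: "\<And>f. lap qt (\<lambda>r. f (snd r)) = (\<lambda>r. lap q f (snd r))"
  shows "c^k - (Bop qt (S\<times>S) c ^^ k) (indicator (S\<times>S)) p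
     \<le> (c^k - (Bop q S c ^^ k) (indicator S) (fst p)) + (c^k - (Bop q S c ^^ k) (indicator S) (snd p))"
proof (induction k arbitrary: p)
  case 0
  then show ?case by (cases p) (auto simp: indicator_def)
next
  case (Suc k)
  define \<gamma>t where "\<gamma>t = (Bop qt (S\<times>S) c ^^ k) (indicator (S\<times>S))"
  define \<gamma> where "\<gamma> = (Bop q S c ^^ k) (indicator S)"
  have bS: "(Bop q S c ^^ Suc k) (indicator S) x \<le> c ^ Suc k" for x
  proof -
    have "(Bop q S c ^^ Suc k) (indicator S) x \<le> c ^ Suc k * indicator S x"
      using Bop_iter_bound[OF deg c, of "indicator S" "Suc k" x] by simp
    also have "\<dots> \<le> c ^ Suc k" using c by (simp add: indicator_def)
    finally show ?thesis .
  qed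
  obtain x y where p: "p = (x, y)" by (cases p)
  show ?case
  proof (cases "p \<in> S\<times>S")
    case False
    have a: "(Bop qt (S\<times>S) c ^^ Suc k) (indicator (S\<times>S)) p = 0"
      by (rule Bop_iter_supp) (auto simp: False)
    show ?thesis
    proof (cases "x \<in> S")
      case True
      then have "y \<notin> S" using False p by auto
      then have "(Bop q S c ^^ Suc k) (indicator S) y = 0" by (intro Bop_iter_supp) auto
      then show ?thesis using bS[of x] a p by simp
    next
      case False
      then have "(Bop q S c ^^ Suc k) (indicator S) x = 0" by (intro Bop_iter_supp) auto
      then show ?thesis using bS[of y] a p by simp
    qed
  next
    case True
    then have xy: "x \<in> S" "y \<in> S" using p by auto
    have e1: "(Bop qt (S\<times>S) c ^^ Suc k) (indicator (S\<times>S)) p = lap qt \<gamma>t p + c * \<gamma>t p"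
      by (simp add: \<gamma>t_def Bop_in True)
    have e2: "(Bop q S c ^^ Suc k) (indicator S) z = lap q \<gamma> z + c * \<gamma> z" if "z \<in> S" for z
      by (simp add: \<gamma>_def Bop_in that)
    define \<alpha> where "\<alpha> z = (-1) * \<gamma> z + 0 * \<gamma> z + c^k" for z
    define F where "F r = \<alpha> (fst r) + \<alpha> (snd r)" for r
    define \<alpha>t where "\<alpha>t r = (-1) * \<gamma>t r + 0 * \<gamma>t r + c^k" for r
    have le: "\<alpha>t r \<le> F r" for r using Suc.IH[of r] unfolding F_def \<alpha>_def \<alpha>t_def \<gamma>_def \<gamma>t_def by simp
    have R: "lap qt \<alpha>t p + c * \<alpha>t p \<le> lap qt F p + c * F p"
      by (rule R_mono) (use degt True le in auto)
    have lt: "lap qt \<alpha>t p = - lap qt \<gamma>t p" unfolding \<alpha>t_def lap_affine by simp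
    have la: "lap q \<alpha> z = - lap q \<gamma> z" for z unfolding \<alpha>_def lap_affine by simp
    have lapF: "lap qt F p = lap q \<alpha> x + lap q \<alpha> y"
    proof -
      have "lap qt F p = lap qt (\<lambda>r. \<alpha> (fst r)) p + lap qt (\<lambda>r. \<alpha> (snd r)) p"
        unfolding F_def by (rule lap_add)
      then show ?thesis by (simp add: c1 c2 p)
    qed
    have A: "lap qt \<alpha>t p + c * \<alpha>t p = c^Suc k - (lap qt \<gamma>t p + c * \<gamma>t p)"
      using lt by (simp add: \<alpha>t_def algebra_simps)
    have B: "lap q \<alpha> z + c * \<alpha> z = c^Suc k - (lap q \<gamma> z + c * \<gamma> z)" for z
      using la[of z] by (simp add: \<alpha>_def algebra_simps)
    have C: "lap qt F p + c * F p = (lap q \<alpha> x + c * \<alpha> x) + (lap q \<alpha> y + c * \<alpha> y)"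
      using lapF p by (simp add: F_def algebra_simps)
    show ?thesis unfolding p fst_conv snd_conv e2[OF xy(1)] e2[OF xy(2)] e1[unfolded p]
      using R A B[of x] B[of y] C unfolding p by linarith
  qed
qed

lemma mono_iter:
  assumes SS: "S \<subseteq> S'" and deg: "\<forall>x\<in>S'. deg q x \<le> c" and c: "0 \<le> c" and f: "\<And>z. 0 \<le> f z"
  shows "(Bop q S c ^^ k) (\<lambda>y. f y * indicator S y) z \<le> (Bop q S' c ^^ k) (\<lambda>y. f y * indicator S' y) z"
proof (induction k arbitrary: z)
  case 0
  then show ?case using SS f[of z] by (auto simp: indicator_def)
next
  case (Suc k)
  define g where "g = (Bop q S c ^^ k) (\<lambda>y. f y * indicator S y)"
  define h where "h = (Bop q S' c ^^ k) (\<lambda>y. f y * indicator S' y)"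
  have degS: "\<forall>x\<in>S. deg q x \<le> c" using deg SS by auto
  have gs: "g z = 0" if "z \<notin> S" for z unfolding g_def by (rule Bop_iter_supp) (auto simp: that)
  have hn: "0 \<le> h z" for z unfolding h_def by (rule Bop_iter_nonneg[OF deg c]) (simp add: f)
  have gh: "g z \<le> h z" for z using Suc.IH unfolding g_def h_def .
  show ?case unfolding funpow.simps comp_def g_def[symmetric] h_def[symmetric]
  proof (cases "z \<in> S")
    case True
    then show "Bop q S c g z \<le> Bop q S' c h z"
      using SS deg by (simp add: Bop_in subsetD R_mono gh)
  next
    case False
    show "Bop q S c g z \<le> Bop q S' c h z"
    proof (cases "z \<in> S'")
      case True
      have "lap q (\<lambda>_. 0) z + c * 0 \<le> lap q h z + c * h z"
        by (rule R_mono) (use deg True hn in auto)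
      then show ?thesis using True False gs by (simp add: Bop_in Bop_out lap_const)
    next
      case False
      then show ?thesis using \<open>z \<notin> S\<close> gs hn c by (simp add: Bop_out)
    qed
  qed
qed



lemma w_nonneg: "0 \<le> t \<Longrightarrow> 0 \<le> t^k / fact k" for t :: real by simp

lemma expc_cancel: "exp (-(c*t)) * exp (c*t) = 1" for c t :: real
  by (simp add: exp_minus_inverse mult.commute)

lemma ind1: "(\<lambda>y. 1 * indicator S y) = (indicator S :: _ \<Rightarrow> real)" by auto

lemma ind_01: "0 \<le> (indicator W z :: real)" "(indicator W z :: real) \<le> 1"
  by (auto simp: indicator_def)

lemma one_01: "0 \<le> (\<lambda>_. 1::real) z" "(\<lambda>_. 1::real) z \<le> 1" by auto

lemma heatS_bounds:
  assumes "finite S" "0 \<le> t" "\<And>z. 0 \<le> f z" "\<And>z. f z \<le> 1"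
  shows "0 \<le> heatS q S t f z \<and> heatS q S t f z \<le> 1"
proof -
  obtain c where c: "0 \<le> c" and deg: "\<forall>x\<in>S. deg q x \<le> c" using deg_exists[OF assms(1)] by blast
  let ?g = "\<lambda>y. f y * indicator S y"
  have sh1: "summable (\<lambda>j. t^j / fact j * (Bop q S c ^^ j) ?g z)"
    by (rule heatS_shift(1)[OF deg c assms(3,4)])
  have h0: "0 \<le> ?g z" for z using assms(3,4)[of z] by (auto simp: indicator_def)
  have h1: "?g z \<le> indicator S z" for z using assms(3,4)[of z] by (auto simp: indicator_def)
  have tb: "0 \<le> t^j / fact j * (Bop q S c ^^ j) ?g z \<and> t^j / fact j * (Bop q S c ^^ j) ?g z \<le> t^j / fact j * c^j" for j
  proof -
    have "0 \<le> (Bop q S c ^^ j) ?g z \<and> (Bop q S c ^^ j) ?g z \<le> c ^ j * indicator S z"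
      by (rule Bop_iter_bound[OF deg c h0 h1])
    moreover have "c ^ j * indicator S z \<le> c ^ j" using c by (simp add: indicator_def)
    ultimately have b: "0 \<le> (Bop q S c ^^ j) ?g z" "(Bop q S c ^^ j) ?g z \<le> c^j" by auto
    show ?thesis
    proof
      show "0 \<le> t^j / fact j * (Bop q S c ^^ j) ?g z" by (rule mult_nonneg_nonneg[OF w_nonneg[OF assms(2)] b(1)])
      show "t^j / fact j * (Bop q S c ^^ j) ?g z \<le> t^j / fact j * c^j" by (rule mult_left_mono[OF b(2) w_nonneg[OF assms(2)]])
    qed
  qed
  define H where "H = (\<Sum>j. t^j / fact j * (Bop q S c ^^ j) ?g z)"
  have sh2: "heatS q S t f z = exp (-(c*t)) * H" unfolding H_def
    by (rule heatS_shift(2)[OF deg c assms(3,4)])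
  have H0: "0 \<le> H" unfolding H_def by (rule suminf_nonneg[OF sh1]) (use tb in auto)
  have H1: "H \<le> exp (c*t)" unfolding H_def
    by (rule sums_le[OF _ summable_sums[OF sh1] sums_exp_ct]) (use tb in auto)
  have "exp (-(c*t)) * H \<le> exp (-(c*t)) * exp (c*t)" by (rule mult_left_mono[OF H1]) simp
  then show ?thesis using sh2 H0 unfolding expc_cancel by simp
qed

lemma heatS_mono:
  assumes "finite S'" "S \<subseteq> S'" "0 \<le> t" "\<And>z. 0 \<le> f z" "\<And>z. f z \<le> 1"
  shows "heatS q S t f z \<le> heatS q S' t f z"
proof -
  obtain c where c: "0 \<le> c" and deg': "\<forall>x\<in>S'. deg q x \<le> c" using deg_exists[OF assms(1)] by blast
  have deg: "\<forall>x\<in>S. deg q x \<le> c" using deg' assms(2) by auto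
  have s1: "summable (\<lambda>j. t^j / fact j * (Bop q S c ^^ j) (\<lambda>y. f y * indicator S y) z)"
    by (rule heatS_shift(1)[OF deg c assms(4,5)])
  have s1': "summable (\<lambda>j. t^j / fact j * (Bop q S' c ^^ j) (\<lambda>y. f y * indicator S' y) z)"
    by (rule heatS_shift(1)[OF deg' c assms(4,5)])
  have e1: "heatS q S t f z = exp (-(c*t)) * (\<Sum>j. t^j / fact j * (Bop q S c ^^ j) (\<lambda>y. f y * indicator S y) z)"
    by (rule heatS_shift(2)[OF deg c assms(4,5)])
  have e1': "heatS q S' t f z = exp (-(c*t)) * (\<Sum>j. t^j / fact j * (Bop q S' c ^^ j) (\<lambda>y. f y * indicator S' y) z)"
    by (rule heatS_shift(2)[OF deg' c assms(4,5)])
  have "(\<Sum>j. t^j / fact j * (Bop q S c ^^ j) (\<lambda>y. f y * indicator S y) z)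
      \<le> (\<Sum>j. t^j / fact j * (Bop q S' c ^^ j) (\<lambda>y. f y * indicator S' y) z)"
    by (rule sums_le[OF _ summable_sums[OF s1] summable_sums[OF s1']])
       (rule mult_left_mono[OF mono_iter[OF assms(2) deg' c assms(4)] w_nonneg[OF assms(3)]])
  then show ?thesis unfolding e1 e1' by (rule mult_left_mono) simp
qed

lemma heat_I:
  fixes q :: "'a \<Rightarrow> 'a \<Rightarrow> real"
  assumes S: "finite S" and t: "0 \<le> t"
    and harm: "\<And>p. lap q \<psi> p = 0" and bnd: "\<And>p. \<psi> p \<le> M * indicator W p" and M: "0 \<le> M"
  shows "\<psi> p \<le> M * (heatS q S t (indicator W) p + 1 - heatS q S t (\<lambda>_. 1) p)"
proof -
  obtain c where c: "0 \<le> c" and deg: "\<forall>x\<in>S. deg q x \<le> c" using deg_exists[OF S] by blast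
  note shW = heatS_shift[OF deg c ind_01, where t=t and z=p]
  note sh1 = heatS_shift[OF deg c one_01, where t=t and z=p, unfolded ind1]
  define w where "w k = t^k / fact k" for k :: nat
  define \<beta> where "\<beta> k = (Bop q S c ^^ k) (\<lambda>y. indicator W y * indicator S y) p" for k
  define \<gamma> where "\<gamma> k = (Bop q S c ^^ k) (indicator S) p" for k
  define H\<beta> where "H\<beta> = (\<Sum>k. w k * \<beta> k)"
  define H\<gamma> where "H\<gamma> = (\<Sum>k. w k * \<gamma> k)"
  have s\<beta>: "(\<lambda>k. w k * \<beta> k) sums H\<beta>" unfolding H\<beta>_def w_def \<beta>_def by (rule summable_sums) (rule shW(1))
  have s\<gamma>: "(\<lambda>k. w k * \<gamma> k) sums H\<gamma>" unfolding H\<gamma>_def w_def \<gamma>_def by (rule summable_sums) (rule sh1(1))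
  have sc: "(\<lambda>k. w k * c^k) sums exp (c*t)" unfolding w_def by (rule sums_exp_ct)
  have L: "(\<lambda>k. w k * c^k * \<psi> p) sums (exp (c*t) * \<psi> p)" by (rule sums_mult2[OF sc])
  have R: "(\<lambda>k. M * ((w k * \<beta> k + w k * c^k) - w k * \<gamma> k)) sums (M * ((H\<beta> + exp (c*t)) - H\<gamma>))"
    by (intro sums_mult sums_diff sums_add s\<beta> s\<gamma> sc)
  have "exp (c*t) * \<psi> p \<le> M * ((H\<beta> + exp (c*t)) - H\<gamma>)"
  proof (rule sums_le[OF _ L R])
    fix k
    have "w k * (c^k * \<psi> p) \<le> w k * (M * (\<beta> k + c^k - \<gamma> k))"
      by (rule mult_left_mono) (use ind_I[OF deg c harm bnd M, of k p] w_nonneg[OF t] in \<open>auto simp: \<beta>_def \<gamma>_def w_def\<close>)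
    then show "w k * c^k * \<psi> p \<le> M * ((w k * \<beta> k + w k * c^k) - w k * \<gamma> k)"
      by (simp add: algebra_simps)
  qed
  then have "exp (-(c*t)) * (exp (c*t) * \<psi> p) \<le> exp (-(c*t)) * (M * ((H\<beta> + exp (c*t)) - H\<gamma>))"
    by (rule mult_left_mono) simp
  moreover have "heatS q S t (indicator W) p = exp (-(c*t)) * H\<beta>"
    using shW(2) unfolding H\<beta>_def w_def \<beta>_def .
  moreover have "heatS q S t (\<lambda>_. 1) p = exp (-(c*t)) * H\<gamma>"
    using sh1(2) unfolding H\<gamma>_def w_def \<gamma>_def .
  ultimately show ?thesis using expc_cancel[of c t] by (simp add: algebra_simps)
qed

lemma heat_II:
  fixes q :: "'a \<Rightarrow> 'a \<Rightarrow> real" and qt :: "'a \<times> 'a \<Rightarrow> 'a \<times> 'a \<Rightarrow> real"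
  assumes S: "finite S" and t: "0 \<le> t"
    and c1: "\<And>f. lap qt (\<lambda>r. f (fst r)) = (\<lambda>r. lap q f (fst r))"
    and c2: "\<And>f. lap qt (\<lambda>r. f (snd r)) = (\<lambda>r. lap q f (snd r))"
  shows "1 - heatS qt (S\<times>S) t (\<lambda>_. 1) p \<le> (1 - heatS q S t (\<lambda>_. 1) (fst p)) + (1 - heatS q S t (\<lambda>_. 1) (snd p))"
proof -
  obtain ca where ca: "0 \<le> ca" and dega: "\<forall>x\<in>S. deg q x \<le> ca" using deg_exists[OF S] by blast
  obtain cb where cb: "0 \<le> cb" and degb: "\<forall>x\<in>S\<times>S. deg qt x \<le> cb" using deg_exists[of "S\<times>S" qt] S by blast
  define c where "c = ca + cb"
  have c: "0 \<le> c" using ca cb by (simp add: c_def)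
  have deg: "\<forall>x\<in>S. deg q x \<le> c" using dega cb unfolding c_def by (fastforce intro: add_increasing2)
  have degt: "\<forall>x\<in>S\<times>S. deg qt x \<le> c" using degb ca unfolding c_def by (fastforce intro: add_increasing)
  note shx = heatS_shift[OF deg c one_01, where t=t and z="fst p", unfolded ind1]
  note shy = heatS_shift[OF deg c one_01, where t=t and z="snd p", unfolded ind1]
  note sht = heatS_shift[OF degt c one_01, where t=t and z=p, unfolded ind1]
  define w where "w k = t^k / fact k" for k :: nat
  define gx where "gx k = (Bop q S c ^^ k) (indicator S) (fst p)" for k
  define gy where "gy k = (Bop q S c ^^ k) (indicator S) (snd p)" for k
  define gt where "gt k = (Bop qt (S\<times>S) c ^^ k) (indicator (S\<times>S)) p" for k
  define Hx where "Hx = (\<Sum>k. w k * gx k)"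
  define Hy where "Hy = (\<Sum>k. w k * gy k)"
  define Ht where "Ht = (\<Sum>k. w k * gt k)"
  have sx: "(\<lambda>k. w k * gx k) sums Hx" unfolding Hx_def w_def gx_def by (rule summable_sums) (rule shx(1))
  have sy: "(\<lambda>k. w k * gy k) sums Hy" unfolding Hy_def w_def gy_def by (rule summable_sums) (rule shy(1))
  have st: "(\<lambda>k. w k * gt k) sums Ht" unfolding Ht_def w_def gt_def by (rule summable_sums) (rule sht(1))
  have sc: "(\<lambda>k. w k * c^k) sums exp (c*t)" unfolding w_def by (rule sums_exp_ct)
  have L: "(\<lambda>k. w k * c^k - w k * gt k) sums (exp (c*t) - Ht)" by (intro sums_diff sc st)
  have R: "(\<lambda>k. (w k * c^k - w k * gx k) + (w k * c^k - w k * gy k)) sums ((exp (c*t) - Hx) + (exp (c*t) - Hy))"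
    by (intro sums_diff sums_add sc sx sy)
  have "exp (c*t) - Ht \<le> (exp (c*t) - Hx) + (exp (c*t) - Hy)"
  proof (rule sums_le[OF _ L R])
    fix k
    have "w k * (c^k - gt k) \<le> w k * ((c^k - gx k) + (c^k - gy k))"
      by (rule mult_left_mono) (use ind_II[OF deg degt c c1 c2, of k p] w_nonneg[OF t] in \<open>auto simp: gx_def gy_def gt_def w_def\<close>)
    then show "w k * c^k - w k * gt k \<le> (w k * c^k - w k * gx k) + (w k * c^k - w k * gy k)"
      by (simp add: algebra_simps)
  qed
  then have "exp (-(c*t)) * (exp (c*t) - Ht) \<le> exp (-(c*t)) * ((exp (c*t) - Hx) + (exp (c*t) - Hy))"
    by (rule mult_left_mono) simp
  moreover have "heatS q S t (\<lambda>_. 1) (fst p) = exp (-(c*t)) * Hx"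
    using shx(2) unfolding Hx_def w_def gx_def .
  moreover have "heatS q S t (\<lambda>_. 1) (snd p) = exp (-(c*t)) * Hy"
    using shy(2) unfolding Hy_def w_def gy_def .
  moreover have "heatS qt (S\<times>S) t (\<lambda>_. 1) p = exp (-(c*t)) * Ht"
    using sht(2) unfolding Ht_def w_def gt_def .
  ultimately show ?thesis using expc_cancel[of c t] by (simp add: algebra_simps)
qed



lemma exhaustion_ex: "\<exists>S::nat \<Rightarrow> 'a::countable set. exhaustion S"
proof
  let ?S = "\<lambda>i::nat. {x::'a. to_nat x \<le> i}"
  have fin: "finite (?S i)" for i
  proof -
    have "?S i = to_nat -` {..i}" by auto
    then show ?thesis using finite_vimageI[OF finite_atMost inj_to_nat] by simp
  qed
  have inc: "incseq ?S" unfolding incseq_def by auto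
  have un: "(\<Union>i. ?S i) = UNIV" by auto
  show "exhaustion ?S" unfolding exhaustion_def using fin inc un by blast
qed

lemma exh_some: "exhaustion (SOME S::nat \<Rightarrow> 'a::countable set. exhaustion S)"
  by (rule someI_ex[OF exhaustion_ex])

lemma exh_cover:
  assumes "exhaustion E" "finite A"
  shows "\<exists>j. A \<subseteq> E j"
  using assms(2)
proof (induction A rule: finite_induct)
  case empty then show ?case by auto
next
  case (insert a A)
  then obtain j where j: "A \<subseteq> E j" by blast
  have "a \<in> (\<Union>i. E i)" using assms(1) unfolding exhaustion_def by auto
  then obtain i where i: "a \<in> E i" by auto
  have inc: "incseq E" using assms(1) unfolding exhaustion_def by auto
  have "E i \<subseteq> E (max i j)" "E j \<subseteq> E (max i j)" using inc unfolding incseq_def by auto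
  then show ?case using i j by blast
qed

lemma heat_conv:
  fixes q :: "'a::countable \<Rightarrow> 'a \<Rightarrow> real"
  assumes t: "0 \<le> t" and f: "\<And>z. 0 \<le> f z" "\<And>z. f z \<le> 1"
  defines "E \<equiv> (SOME S::nat \<Rightarrow> 'a set. exhaustion S)"
  shows "incseq (\<lambda>i. heatS q (E i) t f z)" and "(\<lambda>i. heatS q (E i) t f z) \<longlonglongrightarrow> heat q t f z"
proof -
  have ex: "exhaustion E" unfolding E_def by (rule exh_some)
  then have fin: "finite (E i)" and incE: "incseq E" for i unfolding exhaustion_def by auto
  show inc: "incseq (\<lambda>i. heatS q (E i) t f z)"
    unfolding incseq_def
  proof (intro allI impI)
    fix m n :: nat assume "m \<le> n"
    then have "E m \<subseteq> E n" using incE unfolding incseq_def by auto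
    then show "heatS q (E m) t f z \<le> heatS q (E n) t f z" by (rule heatS_mono[OF fin]) (use t f in auto)
  qed
  have b: "0 \<le> heatS q (E i) t f z \<and> heatS q (E i) t f z \<le> 1" for i
    by (rule heatS_bounds[OF fin t]) (use f in auto)
  have "\<forall>i. heatS q (E i) t f z \<le> 1" using b by blast
  then obtain L where L: "(\<lambda>i. heatS q (E i) t f z) \<longlonglongrightarrow> L" using incseq_convergent[OF inc] by blast
  have "heat q t f z = L" unfolding heat_def E_def[symmetric] using L by (rule limI)
  then show "(\<lambda>i. heatS q (E i) t f z) \<longlonglongrightarrow> heat q t f z" using L by simp
qed

lemma key:
  fixes q :: "'a::countable \<Rightarrow> 'a \<Rightarrow> real" and qt :: "'a \<times> 'a \<Rightarrow> 'a \<times> 'a \<Rightarrow> real"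
  assumes stoch: "\<And>t. 0 \<le> t \<Longrightarrow> heat q t (\<lambda>_. 1) = (\<lambda>_. 1)"
    and c1: "\<And>f. lap qt (\<lambda>r. f (fst r)) = (\<lambda>r. lap q f (fst r))"
    and c2: "\<And>f. lap qt (\<lambda>r. f (snd r)) = (\<lambda>r. lap q f (snd r))"
    and lim: "((\<lambda>t. heat qt t (indicator W) p) \<longlongrightarrow> 0) at_top"
    and harm: "\<And>p. lap qt \<psi> p = 0" and bnd: "\<And>p. \<psi> p \<le> M * indicator W p" and M: "0 \<le> M"
  shows "\<psi> p \<le> 0"
proof -
  define E where "E = (SOME S::nat \<Rightarrow> 'a set. exhaustion S)"
  define Et where "Et = (SOME S::nat \<Rightarrow> ('a\<times>'a) set. exhaustion S)"
  have exE: "exhaustion E" unfolding E_def by (rule exh_some)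
  have exEt: "exhaustion Et" unfolding Et_def by (rule exh_some)
  have finE: "finite (E i)" for i using exE unfolding exhaustion_def by auto
  have finEt: "finite (Et i)" for i using exEt unfolding exhaustion_def by auto
  have step: "\<psi> p \<le> M * heat qt t (indicator W) p" if t: "0 \<le> t" for t
  proof -
    define H where "H = heat qt t (indicator W) p"
    have d: "\<psi> p \<le> M * (H + 2 * \<delta>)" if \<delta>: "0 < \<delta>" for \<delta>
    proof -
      obtain x y where p: "p = (x, y)" by (cases p)
      have cx: "(\<lambda>i. heatS q (E i) t (\<lambda>_. 1) x) \<longlonglongrightarrow> 1"
        using heat_conv(2)[OF t one_01, of q x] stoch[OF t] unfolding E_def by simp
      have cy: "(\<lambda>i. heatS q (E i) t (\<lambda>_. 1) y) \<longlonglongrightarrow> 1"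
        using heat_conv(2)[OF t one_01, of q y] stoch[OF t] unfolding E_def by simp
      have "eventually (\<lambda>i. 1 - \<delta> < heatS q (E i) t (\<lambda>_. 1) x \<and> 1 - \<delta> < heatS q (E i) t (\<lambda>_. 1) y) sequentially"
        using order_tendstoD(1)[OF cx, of "1 - \<delta>"] order_tendstoD(1)[OF cy, of "1 - \<delta>"] \<delta>
        by (auto intro: eventually_conj)
      then obtain N where N: "1 - \<delta> < heatS q (E N) t (\<lambda>_. 1) x" "1 - \<delta> < heatS q (E N) t (\<lambda>_. 1) y"
        unfolding eventually_sequentially by blast
      define S where "S = E N"
      have finS: "finite S" unfolding S_def by (rule finE)
      obtain j where j: "S \<times> S \<subseteq> Et j" using exh_cover[OF exEt finite_cartesian_product[OF finS finS]] by blast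
      have I: "\<psi> p \<le> M * (heatS qt (S\<times>S) t (indicator W) p + 1 - heatS qt (S\<times>S) t (\<lambda>_. 1) p)"
        by (rule heat_I[OF _ t harm bnd M]) (use finS in simp)
      have II: "1 - heatS qt (S\<times>S) t (\<lambda>_. 1) p \<le> (1 - heatS q S t (\<lambda>_. 1) x) + (1 - heatS q S t (\<lambda>_. 1) y)"
        using heat_II[OF finS t c1 c2, of p] p by simp
      have m1: "heatS qt (S\<times>S) t (indicator W) p \<le> heatS qt (Et j) t (indicator W) p"
        by (rule heatS_mono[OF finEt j t ind_01])
      have ci: "incseq (\<lambda>i. heatS qt (Et i) t (indicator W) p)"
        unfolding Et_def by (rule heat_conv(1)[OF t ind_01])
      have cc: "(\<lambda>i. heatS qt (Et i) t (indicator W) p) \<longlonglongrightarrow> H"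
        unfolding Et_def H_def by (rule heat_conv(2)[OF t ind_01])
      have m2: "heatS qt (Et j) t (indicator W) p \<le> H"
        by (rule incseq_le[OF ci cc])
      have "heatS qt (S\<times>S) t (indicator W) p + 1 - heatS qt (S\<times>S) t (\<lambda>_. 1) p \<le> H + 2 * \<delta>"
        using I II m1 m2 N unfolding S_def by linarith
      then show ?thesis using I M by (meson mult_left_mono order_trans)
    qed
    show ?thesis unfolding H_def[symmetric]
    proof (rule field_le_epsilon)
      fix e :: real assume e: "0 < e"
      define \<delta> where "\<delta> = e / (2 * M + 1)"
      have \<delta>0: "0 < \<delta>" using e M unfolding \<delta>_def by simp
      have "M * (2 * \<delta>) \<le> e"
      proof -
        have "M * (2 * \<delta>) = e * (2 * M / (2 * M + 1))" unfolding \<delta>_def using M by (simp add: field_simps)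
        also have "\<dots> \<le> e * 1" using e M by (intro mult_left_mono) (auto simp: field_simps)
        finally show ?thesis by simp
      qed
      then show "\<psi> p \<le> M * H + e" using d[OF \<delta>0] by (simp add: algebra_simps)
    qed
  qed
  show ?thesis
  proof (rule tendsto_le[OF trivial_limit_at_top_linorder])
    show "((\<lambda>t. M * heat qt t (indicator W) p) \<longlongrightarrow> 0) at_top"
      using tendsto_mult_left[OF lim, of M] by simp
    show "((\<lambda>t. \<psi> p) \<longlongrightarrow> \<psi> p) at_top" by simp
    show "eventually (\<lambda>t. \<psi> p \<le> M * heat qt t (indicator W) p) at_top"
      using eventually_ge_at_top[of "0::real"] by eventually_elim (rule step)
  qed
qed



theorem mainTheorem14:
  fixes q :: "'v::countable \<Rightarrow> 'v \<Rightarrow> real"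
    and qt :: "'v \<times> 'v \<Rightarrow> 'v \<times> 'v \<Rightarrow> real"
    and \<phi> :: "'v \<Rightarrow> real"
  assumes "is_graph q" and "reversible q" and "stoch_complete q"
    and "coupling_graph q qt"
    and "\<forall>p. ((\<lambda>t. heat qt t (indicator (UNIV - {(x, x) | x. True})) p) \<longlongrightarrow> 0) at_top"
    and "bounded (range \<phi>)" and "lap q \<phi> = (\<lambda>_. 0)"
  shows "\<exists>c. \<forall>x. \<phi> x = c"
proof -
  define W where "W = (UNIV - {(x, x) | x::'v. True})"
  have stoch: "\<And>t. 0 \<le> t \<Longrightarrow> heat q t (\<lambda>_. 1) = (\<lambda>_. 1)"
    using assms(3) unfolding stoch_complete_def by blast
  have c1: "lap qt (\<lambda>r. f (fst r)) = (\<lambda>r. lap q f (fst r))" for f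
  proof -
    have a: "lap qt (\<lambda>(x, y). f x * 1) = (\<lambda>(x, y). lap q f x * 1)"
      using assms(4) unfolding coupling_graph_def by blast
    have b: "(\<lambda>(x::'v, y::'v). f x * 1) = (\<lambda>r. f (fst r))" by (rule ext) (simp add: split_beta)
    have c: "(\<lambda>(x::'v, y::'v). lap q f x * 1) = (\<lambda>r. lap q f (fst r))" by (rule ext) (simp add: split_beta)
    show ?thesis using a unfolding b c .
  qed
  have c2: "lap qt (\<lambda>r. f (snd r)) = (\<lambda>r. lap q f (snd r))" for f
  proof -
    have a: "lap qt (\<lambda>(x, y). 1 * f y) = (\<lambda>(x, y). 1 * lap q f y)"
      using assms(4) unfolding coupling_graph_def by blast
    have b: "(\<lambda>(x::'v, y::'v). 1 * f y) = (\<lambda>r. f (snd r))" by (rule ext) (simp add: split_beta)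
    have c: "(\<lambda>(x::'v, y::'v). 1 * lap q f y) = (\<lambda>r. lap q f (snd r))" by (rule ext) (simp add: split_beta)
    show ?thesis using a unfolding b c .
  qed
  have lim: "((\<lambda>t. heat qt t (indicator W) p) \<longlongrightarrow> 0) at_top" for p
    using assms(5) unfolding W_def by blast
  obtain K where K0: "\<forall>z\<in>range \<phi>. norm z \<le> K"
    using assms(6) unfolding bounded_iff by blast
  have K: "\<bar>\<phi> x\<bar> \<le> K" for x using K0 by simp
  have M: "0 \<le> 2 * K" using K[of undefined] by linarith
  have h\<phi>: "lap q \<phi> x = 0" for x using assms(7) by simp
  have half: "s * (\<phi> (fst p) - \<phi> (snd p)) \<le> 0" if s: "s = 1 \<or> s = -1" for s p
  proof (rule key[OF stoch c1 c2 lim _ _ M])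
    fix r
    have "lap qt (\<lambda>r. s * \<phi> (fst r) + (-s) * \<phi> (snd r)) r = s * lap qt (\<lambda>r. \<phi> (fst r)) r + (-s) * lap qt (\<lambda>r. \<phi> (snd r)) r"
      by (rule lap_lin)
    then show "lap qt (\<lambda>p. s * (\<phi> (fst p) - \<phi> (snd p))) r = 0"
      by (simp add: c1 c2 h\<phi> algebra_simps)
    show "s * (\<phi> (fst r) - \<phi> (snd r)) \<le> 2 * K * indicator W r"
    proof (cases "r \<in> W")
      case True
      have "\<bar>\<phi> (fst r) - \<phi> (snd r)\<bar> \<le> 2 * K" using K[of "fst r"] K[of "snd r"] by linarith
      then have "s * (\<phi> (fst r) - \<phi> (snd r)) \<le> 2 * K" using s by (auto simp: abs_le_iff)
      then show ?thesis using True by simp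
    next
      case False
      then have "fst r = snd r" unfolding W_def by auto
      then show ?thesis using False by simp
    qed
  qed
  have "\<phi> x = \<phi> y" for x y
    using half[of 1 "(x, y)"] half[of "-1" "(x, y)"] by simp
  then show ?thesis by blast
qed


end
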